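(* Let $X$ be as in the standing setting with skeleton $X_1,\dots,X_k$, where the elements of $X_i$ are scaled (by positive factors) so that $\sum_{e\in X_i}e=0$. Suppose some $x\in X$ lies in no $\operatorname{span}X_l$ and $x\in\operatorname{pos}\{x_i,x_j\}$ with $x_i\in X_i$, $x_j\in X_j$, $i\ne j$. Then every $y\in X\cap\operatorname{span}X_i$ is a positive multiple of $\sum_{e\in S_y}e$. Moreover, for any $p,q\in X\cap\operatorname{span}X_i$, the supports $S_p,S_q$ are either disjoint or one is a subset of the other.
   Context: Standing setting: $X\subset\mathbb R^n\setminus\{0\}$ is a finite set such that $0$ lies in the interior of $\operatorname{conv}X$, no element of $X$ is a positive multiple of another, and every $n+1$ points of $X$ are in good position; elements of $X$ represent directions, so each may be replaced by a positive multiple without affecting these hypotheses. A finite set $A$ is in conical position if $0\notin\operatorname{conv}A$ and no point of $A$ lies in the positive hull (set of nonnegative linear combinations, denoted $\operatorname{pos}$) of the other points; it is in good position otherwise. A skeleton of $X$ is a collection of pairwise disjoint subsets $X_1,\dots,X_k\subseteq X$ such that each $X_i$ is the vertex set of a simplex whose relative interior contains $0$ and $\mathbb R^n=\operatorname{span}X_1\oplus\cdots\oplus\operatorname{span}X_k$. For a nonzero $y\in\operatorname{span}X_i$, its support $S_y$ is the minimal subset of $X_i$ whose positive hull contains $y$. *)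

theory Defs
  imports "HOL-Analysis.Analysis"
begin

text \<open>Positive hull: the set of nonnegative linear combinations (= smallest convex cone
  containing S; note pos {} = {0}).\<close>
abbreviation pos :: "'a::real_vector set \<Rightarrow> 'a set" where
  "pos S \<equiv> convex_cone hull S"

definition conical_position :: "'a::real_vector set \<Rightarrow> bool" where
  "conical_position A \<longleftrightarrow> 0 \<notin> convex hull A \<and> (\<forall>a\<in>A. a \<notin> pos (A - {a}))"

definition good_position :: "'a::real_vector set \<Rightarrow> bool" where
  "good_position A \<longleftrightarrow> \<not> conical_position A"

definition standing :: "'a::euclidean_space set \<Rightarrow> bool" where
  "standing X \<longleftrightarrow> finite X \<and> 0 \<notin> X \<and> 0 \<in> interior (convex hull X)
     \<and> (\<forall>x\<in>X. \<forall>y\<in>X. \<forall>c::real. c > 0 \<and> y = c *\<^sub>R x \<longrightarrow> y = x)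
     \<and> (\<forall>A. A \<subseteq> X \<and> card A = DIM('a) + 1 \<longrightarrow> good_position A)"

text \<open>A skeleton X_0,...,X_{k-1} of X (indexed by i < k).\<close>
definition skeleton :: "'a::euclidean_space set \<Rightarrow> nat \<Rightarrow> (nat \<Rightarrow> 'a set) \<Rightarrow> bool" where
  "skeleton X k Xs \<longleftrightarrow>
     (\<forall>i<k. Xs i \<subseteq> X)
     \<and> (\<forall>i<k. \<forall>j<k. i \<noteq> j \<longrightarrow> Xs i \<inter> Xs j = {})
     \<and> (\<forall>i<k. \<not> affine_dependent (Xs i) \<and> 0 \<in> rel_interior (convex hull (Xs i)))
     \<and> (\<forall>v. \<exists>f. (\<forall>i<k. f i \<in> span (Xs i)) \<and> v = (\<Sum>i<k. f i))
     \<and> (\<forall>f. (\<forall>i<k. f i \<in> span (Xs i)) \<and> (\<Sum>i<k. f i) = 0 \<longrightarrow> (\<forall>i<k. f i = 0))"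

definition is_support :: "'a::real_vector set \<Rightarrow> 'a \<Rightarrow> 'a set \<Rightarrow> bool" where
  "is_support Xi y S \<longleftrightarrow> S \<subseteq> Xi \<and> y \<in> pos S \<and> (\<forall>T. T \<subset> S \<longrightarrow> y \<notin> pos T)"

end

theory Submission imports Defs begin

lemma pos_finite:
  fixes S :: "'a::real_vector set"
  assumes "finite S"
  shows "pos S = {y. \<exists>u. (\<forall>x\<in>S. 0 \<le> u x) \<and> (\<Sum>x\<in>S. u x *\<^sub>R x) = y}"
proof (intro set_eqI iffI)
  fix y assume "y \<in> pos S"
  then consider "y = 0" | z c where "z \<in> convex hull S" "c \<ge> 0" "y = c *\<^sub>R z"
    unfolding convex_cone_hull_convex_hull by auto
  then show "y \<in> {y. \<exists>u. (\<forall>x\<in>S. 0 \<le> u x) \<and> (\<Sum>x\<in>S. u x *\<^sub>R x) = y}"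
  proof cases
    case 1 then show ?thesis by (intro CollectI exI[of _ "\<lambda>_. 0"]) auto
  next
    case 2
    then obtain u where u: "\<forall>x\<in>S. 0 \<le> u x" "(\<Sum>x\<in>S. u x *\<^sub>R x) = z"
      using convex_hull_finite[OF assms] by auto
    show ?thesis
      by (intro CollectI exI[of _ "\<lambda>x. c * u x"])
         (use u 2 in \<open>auto simp: scaleR_sum_right\<close>)
  qed
next
  fix y assume "y \<in> {y. \<exists>u. (\<forall>x\<in>S. 0 \<le> u x) \<and> (\<Sum>x\<in>S. u x *\<^sub>R x) = y}"
  then obtain u where u: "\<forall>x\<in>S. 0 \<le> u x" "(\<Sum>x\<in>S. u x *\<^sub>R x) = y" by auto
  show "y \<in> pos S"
  proof (cases "sum u S = 0")
    case True
    then have "\<forall>x\<in>S. u x = 0" using sum_nonneg_eq_0_iff[OF assms] u by auto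
    then have "y = 0" using u by simp
    then show ?thesis by (simp add: convex_cone_hull_contains_0)
  next
    case False
    then have s: "sum u S > 0" using sum_nonneg[of S u] u by force
    define z where "z = (\<Sum>x\<in>S. (u x / sum u S) *\<^sub>R x)"
    have "z \<in> convex hull S"
      unfolding convex_hull_finite[OF assms] z_def
      by (intro CollectI exI[of _ "\<lambda>x. u x / sum u S"]) (use u s in \<open>auto simp: sum_divide_distrib[symmetric]\<close>)
    moreover have "y = sum u S *\<^sub>R z"
      using s u by (simp add: z_def scaleR_sum_right)
    moreover have "sum u S \<in> {0..}" using s by simp
    ultimately have "y \<in> (\<Union>x\<in>convex hull S. \<Union>c\<in>{0..}. {c *\<^sub>R x})"
      by blast
    then show ?thesis unfolding convex_cone_hull_convex_hull by (rule insertI2)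
  qed
qed

lemma indep_coef:
  fixes S :: "'a::real_vector set"
  assumes "finite S" "independent S" "(\<Sum>v\<in>S. u v *\<^sub>R v) = 0" "v \<in> S"
  shows "u v = 0"
  using assms dependent_finite[OF assms(1)] by auto

locale P55 =
  fixes X :: "'a::euclidean_space set" and k :: nat and Xs :: "nat \<Rightarrow> 'a set"
    and x xi xj :: 'a and i j :: nat
  assumes std: "standing X" and sk: "skeleton X k Xs"
    and sum0: "\<forall>l<k. (\<Sum>e\<in>Xs l. e) = 0"
    and xX: "x \<in> X" and xns: "\<forall>l<k. x \<notin> span (Xs l)"
    and ik: "i < k" and jk: "j < k" and ij: "i \<noteq> j"
    and xiX: "xi \<in> Xs i" and xjX: "xj \<in> Xs j" and xpos: "x \<in> pos {xi, xj}"
begin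

lemma finX: "finite X" using std by (simp add: standing_def)
lemma X0: "0 \<notin> X" using std by (simp add: standing_def)
lemma Xs_sub: "l < k \<Longrightarrow> Xs l \<subseteq> X" using sk by (simp add: skeleton_def)
lemma finXs: "l < k \<Longrightarrow> finite (Xs l)" using Xs_sub finX finite_subset by blast
lemma aff: "l < k \<Longrightarrow> \<not> affine_dependent (Xs l)" using sk by (simp add: skeleton_def)
lemma sk_span: "\<exists>f. (\<forall>l<k. f l \<in> span (Xs l)) \<and> v = (\<Sum>l<k. f l)"
  using sk by (simp add: skeleton_def)
lemma sk_uniq: "(\<forall>l<k. f l \<in> span (Xs l)) \<Longrightarrow> (\<Sum>l<k. f l) = 0 \<Longrightarrow> l < k \<Longrightarrow> f l = 0"
  using sk unfolding skeleton_def by blast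
lemma good: "A \<subseteq> X \<Longrightarrow> card A = DIM('a) + 1 \<Longrightarrow> good_position A"
  using std by (simp add: standing_def)

lemma ones:
  assumes l: "l < k" and rel: "(\<Sum>e\<in>Xs l. c e *\<^sub>R e) = 0" and e: "e \<in> Xs l" and e': "e' \<in> Xs l"
  shows "c e = c e'"
proof -
  let ?S = "Xs l"
  have fin: "finite ?S" using finXs l .
  define m where "m = real (card ?S)"
  have m: "m > 0" using fin e unfolding m_def by (auto simp add: card_gt_0_iff)
  define u where "u z = c z - sum c ?S / m" for z
  have su: "sum u ?S = 0" unfolding u_def using m by (simp add: sum_subtractf m_def)
  have ru: "(\<Sum>z\<in>?S. u z *\<^sub>R z) = 0"
  proof -
    have "(\<Sum>z\<in>?S. u z *\<^sub>R z) = (\<Sum>z\<in>?S. c z *\<^sub>R z) - (sum c ?S / m) *\<^sub>R (\<Sum>z\<in>?S. z)"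
      unfolding u_def by (simp add: scaleR_diff_left sum_subtractf scaleR_sum_right)
    then show ?thesis using rel sum0 l by simp
  qed
  have "\<not> (sum u ?S = 0 \<and> (\<exists>v\<in>?S. u v \<noteq> 0) \<and> (\<Sum>v\<in>?S. u v *\<^sub>R v) = 0)"
    using aff[OF l] unfolding affine_dependent_explicit_finite[OF fin] by blast
  then have "\<forall>z\<in>?S. u z = 0" using su ru by blast
  then have "u e = 0" "u e' = 0" using e e' by blast+
  then show ?thesis unfolding u_def by linarith
qed

lemma span_disj:
  assumes "l < k" "l' < k" "l \<noteq> l'" "v \<in> span (Xs l)" "v \<in> span (Xs l')"
  shows "v = 0"
proof -
  define f where "f m = (if m = l then v else 0) + (if m = l' then -v else 0)" for m
  have "\<forall>m<k. f m \<in> span (Xs m)"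
    using assms by (auto simp: f_def span_neg span_zero)
  moreover have "(\<Sum>m<k. f m) = 0"
    using assms by (simp add: f_def sum.distrib)
  ultimately have "f l = 0" using sk_uniq assms(1) by blast
  then show ?thesis using assms(3) by (simp add: f_def)
qed

lemma Xs_disj: "l < k \<Longrightarrow> l' < k \<Longrightarrow> l \<noteq> l' \<Longrightarrow> Xs l \<inter> Xs l' = {}"
  using sk by (simp add: skeleton_def)

lemma indep_minus:
  assumes l: "l < k" and r: "r \<in> Xs l"
  shows "independent (Xs l - {r})"
proof (rule independent_if_scalars_zero)
  show "finite (Xs l - {r})" using finXs[OF l] by simp
  fix f z assume rel: "(\<Sum>z\<in>Xs l - {r}. f z *\<^sub>R z) = 0" and z: "z \<in> Xs l - {r}"
  define g where "g w = (if w = r then 0 else f w)" for w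
  have "(\<Sum>w\<in>Xs l. g w *\<^sub>R w) = (\<Sum>w\<in>Xs l - {r}. g w *\<^sub>R w)"
    using finXs[OF l] r by (simp add: sum.remove g_def)
  also have "\<dots> = 0" using rel by (simp add: g_def)
  finally have gz: "(\<Sum>w\<in>Xs l. g w *\<^sub>R w) = 0" .
  have "g z = g r" using z r by (intro ones[OF l gz]) auto
  then show "f z = 0" using z by (simp add: g_def)
qed

lemma dim_Xs:
  assumes l: "l < k" and r: "r \<in> Xs l"
  shows "dim (span (Xs l)) = card (Xs l) - 1"
proof -
  have fin: "finite (Xs l)" using finXs[OF l] .
  have "r + (\<Sum>e\<in>Xs l - {r}. e) = 0"
    using sum.remove[OF fin r, of "\<lambda>e. e"] sum0 l by simp
  then have "r = - (\<Sum>e\<in>Xs l - {r}. e)" by (simp add: eq_neg_iff_add_eq_0)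
  moreover have "(\<Sum>e\<in>Xs l - {r}. e) \<in> span (Xs l - {r})" by (intro span_sum span_base)
  ultimately have "r \<in> span (Xs l - {r})" using span_neg[of "(\<Sum>e\<in>Xs l - {r}. e)" "Xs l - {r}"] by simp
  then have "span (Xs l) = span (Xs l - {r})"
    using span_redundant[of r "Xs l - {r}"] r by (simp add: insert_absorb)
  then show ?thesis
    using dim_span_eq_card_independent[OF indep_minus[OF l r]] fin r by simp
qed


lemma alpha_beta: obtains \<alpha> \<beta> where "\<alpha> > 0" "\<beta> > 0" "x = \<alpha> *\<^sub>R xi + \<beta> *\<^sub>R xj"
proof -
  have xij: "xi \<noteq> xj" using Xs_disj[OF ik jk ij] xiX xjX by auto
  obtain u where u: "\<forall>z\<in>{xi,xj}. 0 \<le> u z" "(\<Sum>z\<in>{xi,xj}. u z *\<^sub>R z) = x"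
    using xpos pos_finite[of "{xi,xj}"] by auto
  then have x: "x = u xi *\<^sub>R xi + u xj *\<^sub>R xj" using xij by simp
  have "u xi \<noteq> 0"
  proof
    assume "u xi = 0" then have "x \<in> span (Xs j)" using x xjX by (simp add: span_scale span_base)
    then show False using xns jk by auto
  qed
  moreover have "u xj \<noteq> 0"
  proof
    assume "u xj = 0" then have "x \<in> span (Xs i)" using x xiX by (simp add: span_scale span_base)
    then show False using xns ik by auto
  qed
  ultimately have a: "u xi > 0" and b: "u xj > 0" using u(1) by (simp_all add: order_less_le)
  show ?thesis by (rule that[OF a b x])
qed

definition Bb where "Bb l = (SOME B. B \<subseteq> Xs l \<and> independent B \<and> Xs l \<subseteq> span B \<and> (l = j \<longrightarrow> xj \<in> B))"

lemma Bb_ex: "\<exists>B. B \<subseteq> Xs l \<and> independent B \<and> Xs l \<subseteq> span B \<and> (l = j \<longrightarrow> xj \<in> B)"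
proof -
  let ?S = "if l = j then {xj} else {}"
  have S1: "?S \<subseteq> Xs l" using xjX by auto
  have "xj \<noteq> 0" using X0 Xs_sub[OF jk] xjX by auto
  then have S2: "independent ?S" by (cases "l = j") (simp_all add: independent_insert independent_empty)
  obtain B where "?S \<subseteq> B" "B \<subseteq> Xs l" "independent B" "Xs l \<subseteq> span B"
    using maximal_independent_subset_extend[OF S1 S2] by blast
  then show ?thesis by (intro exI[of _ B]) auto
qed

lemma Bb: "Bb l \<subseteq> Xs l" "independent (Bb l)" "Xs l \<subseteq> span (Bb l)" "l = j \<Longrightarrow> xj \<in> Bb l"
  using someI_ex[OF Bb_ex[of l]] unfolding Bb_def[symmetric] by auto

lemma main:
  assumes CX: "C \<subseteq> X" and Csp: "C \<subseteq> span (Xs i)" and Ccard: "card (Xs i) \<le> card C + 1"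
    and H: "\<And>\<gamma> c. \<gamma> *\<^sub>R xi + (\<Sum>v\<in>C. c v *\<^sub>R v) = 0 \<Longrightarrow>
        (\<gamma> = 0 \<longrightarrow> (\<forall>v\<in>C. c v = 0)) \<and> (\<gamma> \<noteq> 0 \<longrightarrow> (\<exists>v\<in>C. c v > 0) \<and> (\<exists>v\<in>C. c v < 0))"
  shows False
proof -
  obtain \<alpha> \<beta> where ab: "\<alpha> > 0" "\<beta> > 0" "x = \<alpha> *\<^sub>R xi + \<beta> *\<^sub>R xj" using alpha_beta by blast
  have finC: "finite C" using CX finX finite_subset by blast
  have indC: "independent C"
  proof (rule independent_if_scalars_zero[OF finC])
    fix f z assume "(\<Sum>z\<in>C. f z *\<^sub>R z) = 0" "z \<in> C"
    then show "f z = 0" using H[of 0 f] by auto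
  qed
  have Cspan: "Xs i \<subseteq> span C"
  proof -
    have "span (Xs i) \<subseteq> span C"
      using card_ge_dim_independent[OF Csp indC] dim_Xs[OF ik xiX] Ccard by linarith
    then show ?thesis using span_superset by blast
  qed
  define T where "T l = (if l = i then C else Bb l)" for l
  have T: "T l \<subseteq> X" "T l \<subseteq> span (Xs l)" "Xs l \<subseteq> span (T l)" "finite (T l)" "independent (T l)"
    if "l < k" for l
  proof -
    show "T l \<subseteq> X" using CX Bb(1)[of l] Xs_sub[OF that] by (auto simp: T_def)
    then show "finite (T l)" using finX finite_subset by blast
    have "Bb l \<subseteq> span (Xs l)" using Bb(1)[of l] span_superset[of "Xs l"] by blast
    then show "T l \<subseteq> span (Xs l)" using Csp by (simp add: T_def)
    show "Xs l \<subseteq> span (T l)" using Cspan Bb(3)[of l] by (auto simp: T_def)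
    show "independent (T l)" using indC Bb(2)[of l] by (auto simp: T_def)
  qed
  have T0: "0 \<notin> T l" if "l<k" for l using T(1)[OF that] X0 by auto
  have Tdisj: "T l \<inter> T l' = {}" if "l<k" "l'<k" "l\<noteq>l'" for l l'
  proof (rule equals0I)
    fix v assume v: "v \<in> T l \<inter> T l'"
    then have "v \<in> span (Xs l)" "v \<in> span (Xs l')" using T(2)[OF that(1)] T(2)[OF that(2)] by auto
    then have "v = 0" using span_disj[OF that] by blast
    then show False using v T0[OF that(1)] by simp
  qed
  define D where "D = (\<Union>l<k. T l)"
  have finD: "finite D" unfolding D_def using T(4) by auto
  have DX: "D \<subseteq> X" unfolding D_def using T(1) by auto
  have TD: "T l \<subseteq> D" if "l < k" for l unfolding D_def using that by auto
  have split: "(\<Sum>a\<in>D. c a *\<^sub>R a) = (\<Sum>l<k. \<Sum>a\<in>T l. c a *\<^sub>R a)" for c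
    unfolding D_def by (rule sum.UNION_disjoint) (use T(4) Tdisj in auto)
  have decomp: "(\<Sum>a\<in>T i. c a *\<^sub>R a) + (\<gamma>*\<alpha>) *\<^sub>R xi = 0 \<and> (\<Sum>a\<in>T j. c a *\<^sub>R a) + (\<gamma>*\<beta>) *\<^sub>R xj = 0
      \<and> (\<forall>l<k. l \<noteq> i \<longrightarrow> l \<noteq> j \<longrightarrow> (\<Sum>a\<in>T l. c a *\<^sub>R a) = 0)"
    if rel: "\<gamma> *\<^sub>R x + (\<Sum>a\<in>D. c a *\<^sub>R a) = 0" for \<gamma> c
  proof -
    define f where "f l = (\<Sum>a\<in>T l. c a *\<^sub>R a) + (if l = i then (\<gamma>*\<alpha>) *\<^sub>R xi else 0)
       + (if l = j then (\<gamma>*\<beta>) *\<^sub>R xj else 0)" for l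
    have fs: "\<forall>l<k. f l \<in> span (Xs l)"
    proof (intro allI impI)
      fix l assume l: "l < k"
      have "(\<Sum>a\<in>T l. c a *\<^sub>R a) \<in> span (Xs l)"
        using T(2)[OF l] by (intro span_sum span_scale) auto
      moreover have "xi \<in> span (Xs i)" "xj \<in> span (Xs j)" using xiX xjX by (auto intro: span_base)
      ultimately show "f l \<in> span (Xs l)" unfolding f_def
        by (intro span_add) (auto intro: span_scale span_zero)
    qed
    have "(\<Sum>l<k. f l) = (\<Sum>a\<in>D. c a *\<^sub>R a) + (\<gamma>*\<alpha>) *\<^sub>R xi + (\<gamma>*\<beta>) *\<^sub>R xj"
      unfolding f_def split using ik jk by (simp add: sum.distrib)
    also have "\<dots> = \<gamma> *\<^sub>R x + (\<Sum>a\<in>D. c a *\<^sub>R a)" using ab by (simp add: scaleR_add_right algebra_simps)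
    also have "\<dots> = 0" by (rule rel)
    finally have fsum: "(\<Sum>l<k. f l) = 0" .
    have fz: "f l = 0" if "l < k" for l using sk_uniq[OF fs fsum that] .
    have "\<forall>l<k. l \<noteq> i \<longrightarrow> l \<noteq> j \<longrightarrow> (\<Sum>a\<in>T l. c a *\<^sub>R a) = 0"
    proof (intro allI impI)
      fix l assume "l < k" "l \<noteq> i" "l \<noteq> j"
      then show "(\<Sum>a\<in>T l. c a *\<^sub>R a) = 0" using fz[of l] by (simp add: f_def)
    qed
    moreover have "(\<Sum>a\<in>T i. c a *\<^sub>R a) + (\<gamma>*\<alpha>) *\<^sub>R xi = 0" using fz[OF ik] ij by (simp add: f_def)
    moreover have "(\<Sum>a\<in>T j. c a *\<^sub>R a) + (\<gamma>*\<beta>) *\<^sub>R xj = 0" using fz[OF jk] ij by (simp add: f_def)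
    ultimately show ?thesis by blast
  qed
  have relD: "\<forall>a\<in>D. c a = 0" if rel0: "(\<Sum>a\<in>D. c a *\<^sub>R a) = 0" for c
  proof
    fix a assume "a \<in> D"
    then obtain l where l: "l<k" "a \<in> T l" unfolding D_def by auto
    have d: "(\<Sum>a\<in>T i. c a *\<^sub>R a) = 0" "(\<Sum>a\<in>T j. c a *\<^sub>R a) = 0"
        "\<forall>l<k. l \<noteq> i \<longrightarrow> l \<noteq> j \<longrightarrow> (\<Sum>a\<in>T l. c a *\<^sub>R a) = 0"
      using decomp[of 0 c] rel0 by auto
    have "(\<Sum>a\<in>T l. c a *\<^sub>R a) = 0" using d l(1) by (cases "l = i"; cases "l = j") auto
    then show "c a = 0" using indep_coef[OF T(4)[OF l(1)] T(5)[OF l(1)]] l(2) by blast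
  qed
  have indD: "independent D"
    by (rule independent_if_scalars_zero[OF finD]) (use relD in blast)
  have spanD: "UNIV \<subseteq> span D"
  proof
    fix v :: 'a
    obtain f where f: "\<forall>l<k. f l \<in> span (Xs l)" "v = (\<Sum>l<k. f l)" using sk_span by blast
    have "f l \<in> span D" if "l < k" for l
    proof -
      have "span (Xs l) \<subseteq> span (T l)" using T(3)[OF that] by (simp add: span_minimal)
      also have "\<dots> \<subseteq> span D" using TD[OF that] by (rule span_mono)
      finally show ?thesis using f(1) that by blast
    qed
    then show "v \<in> span D" using f(2) by (auto intro: span_sum)
  qed
  have cardD: "card D = DIM('a)"
    using basis_card_eq_dim[of D UNIV] spanD indD by simp
  have xD: "x \<notin> D"
  proof
    assume "x \<in> D"
    then obtain l where "l<k" "x \<in> T l" unfolding D_def by auto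
    then show False using T(2) xns by blast
  qed
  define A where "A = insert x D"
  have finA: "finite A" using finD by (simp add: A_def)
  have AX: "A \<subseteq> X" using DX xX by (simp add: A_def)
  have cardA: "card A = DIM('a) + 1" using cardD xD finD by (simp add: A_def)
  have twoneg: "\<exists>a\<in>A. \<exists>b\<in>A. a \<noteq> b \<and> c a < 0 \<and> c b < 0"
    if rel: "(\<Sum>a\<in>A. c a *\<^sub>R a) = 0" and nz: "\<exists>a\<in>A. c a \<noteq> 0" for c
  proof -
    have rel': "c x *\<^sub>R x + (\<Sum>a\<in>D. c a *\<^sub>R a) = 0" using rel xD finD by (simp add: A_def)
    note d = decomp[OF rel']
    have cx: "c x \<noteq> 0"
    proof
      assume c0: "c x = 0"
      then have "(\<Sum>a\<in>D. c a *\<^sub>R a) = 0" using rel' by simp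
      then have "\<forall>a\<in>D. c a = 0" by (rule relD)
      then show False using nz c0 by (auto simp: A_def)
    qed
    have "(\<Sum>v\<in>C. c v *\<^sub>R v) + (c x * \<alpha>) *\<^sub>R xi = 0"
      using conjunct1[OF d] by (simp add: T_def)
    then have "(c x * \<alpha>) *\<^sub>R xi + (\<Sum>v\<in>C. c v *\<^sub>R v) = 0" by (simp only: add.commute)
    moreover have "c x * \<alpha> \<noteq> 0" using cx ab by simp
    ultimately obtain w where w: "w \<in> C" "c w < 0" using H[of "c x * \<alpha>" c] by blast
    have xjB: "xj \<in> Bb j" using Bb(4) by simp
    have finB: "finite (Bb j)" using T(4)[OF jk] ij by (simp add: T_def)
    have cxj: "c xj = - (c x * \<beta>)"
    proof -
      define g where "g = c(xj := c xj + c x * \<beta>)"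
      have "(\<Sum>a\<in>Bb j. g a *\<^sub>R a) = g xj *\<^sub>R xj + (\<Sum>a\<in>Bb j - {xj}. g a *\<^sub>R a)"
        using sum.remove[OF finB xjB] .
      also have "(\<Sum>a\<in>Bb j - {xj}. g a *\<^sub>R a) = (\<Sum>a\<in>Bb j - {xj}. c a *\<^sub>R a)"
        by (rule sum.cong) (auto simp: g_def)
      also have "g xj *\<^sub>R xj = c xj *\<^sub>R xj + (c x * \<beta>) *\<^sub>R xj" by (simp add: g_def scaleR_add_left)
      finally have "(\<Sum>a\<in>Bb j. g a *\<^sub>R a) = (\<Sum>a\<in>Bb j. c a *\<^sub>R a) + (c x * \<beta>) *\<^sub>R xj"
        unfolding sum.remove[OF finB xjB, of "\<lambda>a. c a *\<^sub>R a"] by (simp only: add_ac)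
      also have "\<dots> = 0" using d ij by (simp add: T_def)
      finally have "g xj = 0" using indep_coef[OF finB Bb(2) _ xjB] by blast
      then show ?thesis by (simp add: g_def)
    qed
    have xjA: "xj \<in> A" using TD[OF jk] xjB ij by (auto simp: A_def T_def)
    have wA: "w \<in> A" using TD[OF ik] w by (auto simp: A_def T_def)
    have xw: "x \<noteq> w" using xD TD[OF ik] w by (auto simp: T_def)
    have xjw: "xj \<noteq> w" using Tdisj[OF ik jk ij] w xjB ij by (auto simp: T_def)
    show ?thesis
    proof (cases "c x < 0")
      case True
      have xA: "x \<in> A" by (simp add: A_def)
      show ?thesis using True w(2) wA xw xA by blast
    next
      case False
      then have "c x > 0" using cx by linarith
      then have "c x * \<beta> > 0" using ab(2) by simp
      then have "c xj < 0" using cxj by linarith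
      then show ?thesis using w wA xjA xjw by blast
    qed
  qed
  have conical: "conical_position A"
    unfolding conical_position_def
  proof (intro conjI ballI notI)
    assume "0 \<in> convex hull A"
    then obtain u where u: "\<forall>a\<in>A. 0 \<le> u a" "sum u A = 1" "(\<Sum>a\<in>A. u a *\<^sub>R a) = 0"
      using convex_hull_finite[OF finA] by auto
    have nz: "\<exists>a\<in>A. u a \<noteq> 0"
    proof (rule ccontr)
      assume "\<not> (\<exists>a\<in>A. u a \<noteq> 0)"
      then have "sum u A = 0" by simp
      then show False using u(2) by simp
    qed
    obtain a1 where a1: "a1 \<in> A" "u a1 < 0" using twoneg[OF u(3) nz] by blast
    have "0 \<le> u a1" using u(1) a1(1) by blast
    then show False using a1(2) by linarith
  next
    fix a assume a: "a \<in> A" "a \<in> pos (A - {a})"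
    then obtain u where u: "\<forall>b\<in>A-{a}. 0 \<le> u b" "(\<Sum>b\<in>A-{a}. u b *\<^sub>R b) = a"
      using pos_finite[of "A - {a}"] finA by auto
    define c where "c b = (if b = a then -1 else u b)" for b
    have "(\<Sum>b\<in>A. c b *\<^sub>R b) = c a *\<^sub>R a + (\<Sum>b\<in>A-{a}. c b *\<^sub>R b)" using sum.remove[OF finA a(1)] .
    also have "(\<Sum>b\<in>A-{a}. c b *\<^sub>R b) = (\<Sum>b\<in>A-{a}. u b *\<^sub>R b)" by (rule sum.cong) (auto simp: c_def)
    finally have "(\<Sum>b\<in>A. c b *\<^sub>R b) = 0" using u by (simp add: c_def)
    moreover have "\<exists>b\<in>A. c b \<noteq> 0" using a(1) by (intro bexI[of _ a]) (simp_all add: c_def)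
    ultimately obtain b1 b2 where b12: "b1\<in>A" "b2\<in>A" "b1\<noteq>b2" "c b1 < 0" "c b2 < 0"
      using twoneg[of c] by blast
    then obtain b where b: "b \<in> A" "b \<noteq> a" "c b < 0" by (cases "b1 = a") auto
    then have "u b < 0" by (simp add: c_def)
    moreover have "0 \<le> u b" using u(1) b(1,2) by blast
    ultimately show False by linarith
  qed
  then show False using good[OF AX cardA] unfolding good_position_def by simp
qed


lemma ext_sum:
  assumes "S \<subseteq> Xs i"
  shows "(\<Sum>e\<in>Xs i. (if e \<in> S then lam e else 0) *\<^sub>R e) = (\<Sum>e\<in>S. lam e *\<^sub>R e)"
proof -
  have fin: "finite (Xs i)" using finXs[OF ik] .
  have "(\<Sum>e\<in>Xs i. (if e \<in> S then lam e else 0) *\<^sub>R e) = (\<Sum>e\<in>S. (if e \<in> S then lam e else 0) *\<^sub>R e)"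
    using assms fin by (intro sum.mono_neutral_right) auto
  also have "\<dots> = (\<Sum>e\<in>S. lam e *\<^sub>R e)" by (rule sum.cong) auto
  finally show ?thesis .
qed

lemma support:
  assumes y0: "y \<noteq> 0" and sup: "is_support (Xs i) y S"
  obtains lam where "\<forall>e\<in>S. lam e > 0" "y = (\<Sum>e\<in>S. lam e *\<^sub>R e)" "S \<noteq> {}" "S \<subseteq> Xs i" "S \<noteq> Xs i" "finite S"
proof -
  have SX: "S \<subseteq> Xs i" and yS: "y \<in> pos S" and mn: "\<forall>T. T \<subset> S \<longrightarrow> y \<notin> pos T"
    using sup by (auto simp: is_support_def)
  have finS: "finite S" using SX finXs[OF ik] finite_subset by blast
  obtain u where u: "\<forall>e\<in>S. 0 \<le> u e" "(\<Sum>e\<in>S. u e *\<^sub>R e) = y" using yS pos_finite[OF finS] by auto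
  have upos: "\<forall>e\<in>S. u e > 0"
  proof
    fix e assume e: "e \<in> S"
    show "u e > 0"
    proof (rule ccontr)
      assume "\<not> u e > 0" then have ue: "u e = 0" using u(1) e by force
      have "(\<Sum>e\<in>S - {e}. u e *\<^sub>R e) = y" using u(2) sum.remove[OF finS e, of "\<lambda>e. u e *\<^sub>R e"] ue by simp
      then have "y \<in> pos (S - {e})" using finS u(1) by (subst pos_finite) auto
      then show False using mn e by blast
    qed
  qed
  have Sne: "S \<noteq> {}" using u y0 by auto
  have SXi: "S \<noteq> Xs i"
  proof
    assume SE: "S = Xs i"
    define m where "m = Min (u ` S)"
    have "m \<in> u ` S" unfolding m_def using finS Sne by (intro Min_in) auto
    then obtain e0 where e0: "e0 \<in> S" "u e0 = m" by auto
    have mle: "\<forall>e\<in>S. m \<le> u e" unfolding m_def using finS by auto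
    have "(\<Sum>e\<in>S. (u e - m) *\<^sub>R e) = (\<Sum>e\<in>S. u e *\<^sub>R e) - m *\<^sub>R (\<Sum>e\<in>S. e)"
      by (simp add: scaleR_diff_left sum_subtractf scaleR_sum_right)
    also have "\<dots> = y" using sum0 ik SE u(2) by simp
    finally have s1: "(\<Sum>e\<in>S. (u e - m) *\<^sub>R e) = y" .
    then have "(\<Sum>e\<in>S - {e0}. (u e - m) *\<^sub>R e) = y"
      using sum.remove[OF finS e0(1), of "\<lambda>e. (u e - m) *\<^sub>R e"] e0 by simp
    then have "y \<in> pos (S - {e0})" using finS mle
      by (subst pos_finite) (auto intro!: exI[of _ "\<lambda>e. u e - m"])
    then show False using mn e0 by blast
  qed
  show ?thesis using that[OF upos u(2)[symmetric] Sne SX SXi finS] .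
qed

lemma expand:
  assumes Y: "finite Y" "Y \<inter> Xs i = {}" and D: "D \<subseteq> Xs i"
    and lam: "\<And>y. y \<in> Y \<Longrightarrow> y = (\<Sum>e\<in>Xs i. lam y e *\<^sub>R e)"
  shows "\<gamma> *\<^sub>R xi + (\<Sum>v\<in>Y \<union> (Xs i - D). c v *\<^sub>R v) =
    (\<Sum>e\<in>Xs i. ((if e = xi then \<gamma> else 0) + (\<Sum>y\<in>Y. c y * lam y e) + (if e \<in> D then 0 else c e)) *\<^sub>R e)"
proof -
  have fin: "finite (Xs i)" using finXs[OF ik] .
  have s1: "(\<Sum>v\<in>Y \<union> (Xs i - D). c v *\<^sub>R v) = (\<Sum>v\<in>Y. c v *\<^sub>R v) + (\<Sum>v\<in>Xs i - D. c v *\<^sub>R v)"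
    using Y fin by (intro sum.union_disjoint) auto
  have s2: "(\<Sum>v\<in>Y. c v *\<^sub>R v) = (\<Sum>e\<in>Xs i. (\<Sum>y\<in>Y. c y * lam y e) *\<^sub>R e)"
  proof -
    have "(\<Sum>v\<in>Y. c v *\<^sub>R v) = (\<Sum>y\<in>Y. \<Sum>e\<in>Xs i. (c y * lam y e) *\<^sub>R e)"
    proof (rule sum.cong[OF refl])
      fix y assume y: "y \<in> Y"
      have "c y *\<^sub>R y = c y *\<^sub>R (\<Sum>e\<in>Xs i. lam y e *\<^sub>R e)"
        using lam[OF y] by (rule arg_cong[where f="\<lambda>v. c y *\<^sub>R v"])
      then show "c y *\<^sub>R y = (\<Sum>e\<in>Xs i. (c y * lam y e) *\<^sub>R e)" by (simp add: scaleR_sum_right)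
    qed
    also have "\<dots> = (\<Sum>e\<in>Xs i. \<Sum>y\<in>Y. (c y * lam y e) *\<^sub>R e)" by (rule sum.swap)
    also have "\<dots> = (\<Sum>e\<in>Xs i. (\<Sum>y\<in>Y. c y * lam y e) *\<^sub>R e)" by (simp add: scaleR_sum_left)
    finally show ?thesis .
  qed
  have s3: "(\<Sum>v\<in>Xs i - D. c v *\<^sub>R v) = (\<Sum>e\<in>Xs i. (if e \<in> D then 0 else c e) *\<^sub>R e)"
  proof -
    have "(\<Sum>e\<in>Xs i. (if e \<in> D then 0 else c e) *\<^sub>R e) = (\<Sum>e\<in>Xs i - D. (if e \<in> D then 0 else c e) *\<^sub>R e)"
      using fin by (intro sum.mono_neutral_right) auto
    also have "\<dots> = (\<Sum>v\<in>Xs i - D. c v *\<^sub>R v)" by (rule sum.cong) auto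
    finally show ?thesis by simp
  qed
  have s4: "\<gamma> *\<^sub>R xi = (\<Sum>e\<in>Xs i. (if e = xi then \<gamma> else 0) *\<^sub>R e)"
  proof -
    have "(\<Sum>e\<in>Xs i. (if e = xi then \<gamma> else 0) *\<^sub>R e) = (\<Sum>e\<in>Xs i. if e = xi then \<gamma> *\<^sub>R e else 0)"
      by (rule sum.cong) auto
    also have "\<dots> = \<gamma> *\<^sub>R xi" using fin xiX by simp
    finally show ?thesis by simp
  qed
  show ?thesis unfolding s1 s2 s3 s4 by (simp add: scaleR_add_left sum.distrib add.assoc)
qed

lemma notin_Xs:
  assumes S: "S \<subseteq> Xs i" and y: "y = (\<Sum>e\<in>S. lam e *\<^sub>R e)" and lp: "\<forall>e\<in>S. lam e > 0"
    and s: "s \<in> S" "s \<noteq> y" and ob: "ob \<in> Xs i" "ob \<notin> S"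
  shows "y \<notin> Xs i"
proof
  assume yX: "y \<in> Xs i"
  have fin: "finite (Xs i)" using finXs[OF ik] .
  define K where "K e = (if e \<in> S then lam e else 0) + (if e = y then -1 else 0)" for e
  have "(\<Sum>e\<in>Xs i. K e *\<^sub>R e) = (\<Sum>e\<in>Xs i. (if e \<in> S then lam e else 0) *\<^sub>R e)
      + (\<Sum>e\<in>Xs i. (if e = y then -1 else 0) *\<^sub>R e)"
    unfolding K_def by (simp add: scaleR_add_left sum.distrib)
  also have "(\<Sum>e\<in>Xs i. (if e = y then -1 else 0) *\<^sub>R e) = - y"
  proof -
    have "(\<Sum>e\<in>Xs i. (if e = y then (-1::real) else 0) *\<^sub>R e) = (\<Sum>e\<in>Xs i. if e = y then - e else 0)"
      by (rule sum.cong) auto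
    also have "\<dots> = - y" using fin yX by simp
    finally show ?thesis .
  qed
  also have "(\<Sum>e\<in>Xs i. (if e \<in> S then lam e else 0) *\<^sub>R e) = y" using ext_sum[OF S] y by simp
  finally have "(\<Sum>e\<in>Xs i. K e *\<^sub>R e) = 0" by simp
  then have "K s = K ob" using s S ob by (intro ones[OF ik]) auto
  then show False using lp s ob by (auto simp: K_def split: if_splits)
qed

lemma span_of_support:
  assumes "S \<subseteq> Xs i" shows "(\<Sum>e\<in>S. lam e *\<^sub>R e) \<in> span (Xs i)"
  using assms by (intro span_sum span_scale span_base) auto


lemma no_xi:
  assumes yX: "y \<in> X" and sup: "is_support (Xs i) y S"
    and s12: "s1 \<in> S" "s2 \<in> S" "s1 \<noteq> s2"
  shows "xi \<notin> S"
proof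
  assume xiS: "xi \<in> S"
  have y0: "y \<noteq> 0" using yX X0 by auto
  obtain lam where L: "\<forall>e\<in>S. lam e > 0" "y = (\<Sum>e\<in>S. lam e *\<^sub>R e)" "S \<noteq> {}" "S \<subseteq> Xs i" "S \<noteq> Xs i" "finite S"
    using support[OF y0 sup] by blast
  obtain b where b: "b \<in> Xs i" "b \<notin> S" using L(4,5) by blast
  obtain e0 where e0: "e0 \<in> S" "e0 \<noteq> xi" using s12 by metis
  obtain s where s: "s \<in> S" "s \<noteq> y" using s12 by metis
  have ynX: "y \<notin> Xs i" using notin_Xs[OF L(4) L(2) L(1) s b] .
  define lx where "lx e = (if e \<in> S then lam e else 0)" for e
  have ysum: "y = (\<Sum>e\<in>Xs i. lx e *\<^sub>R e)" using ext_sum[OF L(4)] L(2) by (simp add: lx_def)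
  have fin: "finite (Xs i)" using finXs[OF ik] .
  have bxi: "b \<noteq> xi" using b xiS by auto
  have yspan: "y \<in> span (Xs i)" using span_of_support[OF L(4)] L(2) by simp
  define C where "C = {y} \<union> (Xs i - {xi, b})"
  show False
  proof (rule main[of C])
    show "C \<subseteq> X" using yX Xs_sub[OF ik] by (auto simp: C_def)
    show "C \<subseteq> span (Xs i)" using yspan span_superset by (auto simp: C_def)
    have c1: "card (Xs i - {xi, b}) = card (Xs i) - 2"
      using fin xiX b bxi by (simp add: card_Diff_subset)
    have c2: "card C = card (Xs i - {xi, b}) + 1" using fin ynX by (simp add: C_def)
    have "card {xi, b} \<le> card (Xs i)" using fin xiX b by (intro card_mono) auto
    then show "card (Xs i) \<le> card C + 1" using c1 c2 bxi by simp
  next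
    fix \<gamma> c assume rel: "\<gamma> *\<^sub>R xi + (\<Sum>v\<in>C. c v *\<^sub>R v) = 0"
    define K where "K e = (if e = xi then \<gamma> else 0) + (\<Sum>y'\<in>{y}. c y' * lx e) + (if e \<in> {xi,b} then 0 else c e)" for e
    have ex: "\<gamma> *\<^sub>R xi + (\<Sum>v\<in>{y} \<union> (Xs i - {xi,b}). c v *\<^sub>R v) = (\<Sum>e\<in>Xs i. K e *\<^sub>R e)"
      unfolding K_def by (rule expand) (use ynX xiX b ysum in auto)
    have K0: "(\<Sum>e\<in>Xs i. K e *\<^sub>R e) = 0" using ex rel by (simp add: C_def)
    have K: "K e = K e'" if "e \<in> Xs i" "e' \<in> Xs i" for e e' using ones[OF ik K0 that] .
    have Kxi: "K xi = \<gamma> + c y * lam xi" using xiS bxi by (simp add: K_def lx_def)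
    have Kb: "K b = 0" using b bxi by (simp add: K_def lx_def)
    have Kv: "K v = c y * lx v + c v" if "v \<in> Xs i - {xi,b}" for v using that by (simp add: K_def)
    have e0D: "e0 \<in> Xs i - {xi,b}" using e0 b L(4) by auto
    have eq1: "\<gamma> + c y * lam xi = 0" using K[OF xiX b(1)] Kxi Kb by simp
    have eq2: "c y * lam e0 + c e0 = 0" using K[of e0 b] e0D b(1) Kv[OF e0D] Kb e0 by (simp add: lx_def)
    have yC: "y \<in> C" and e0C: "e0 \<in> C" using e0D by (auto simp: C_def)
    have lx0: "lam xi > 0" "lam e0 > 0" using L(1) xiS e0 by auto
    show "(\<gamma> = 0 \<longrightarrow> (\<forall>v\<in>C. c v = 0)) \<and> (\<gamma> \<noteq> 0 \<longrightarrow> (\<exists>v\<in>C. c v > 0) \<and> (\<exists>v\<in>C. c v < 0))"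
    proof (rule conjI; intro impI)
      assume g0: "\<gamma> = 0"
      then have cy: "c y = 0" using eq1 lx0 by simp
      show "\<forall>v\<in>C. c v = 0"
      proof
        fix v assume "v \<in> C"
        then consider "v = y" | "v \<in> Xs i - {xi,b}" by (auto simp: C_def)
        then show "c v = 0"
        proof cases
          case 1 then show ?thesis using cy by simp
        next
          case 2 then have "K v = K b" using K[of v b] b(1) by simp
          then show ?thesis using Kv[OF 2] Kb cy by simp
        qed
      qed
    next
      assume "\<gamma> \<noteq> 0"
      then have cy0: "c y \<noteq> 0" using eq1 by auto
      have ce0: "c e0 = - (c y * lam e0)" using eq2 by linarith
      have "c y > 0 \<or> c y < 0" using cy0 by linarith
      then show "(\<exists>v\<in>C. c v > 0) \<and> (\<exists>v\<in>C. c v < 0)"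
      proof
        assume cp: "c y > 0"
        then have "c y * lam e0 > 0" using lx0 by simp
        then show ?thesis using yC e0C ce0 cp by force
      next
        assume cn: "c y < 0"
        then have "c y * lam e0 < 0" using lx0 by (simp add: mult_neg_pos)
        then show ?thesis using yC e0C ce0 cn by force
      qed
    qed
  qed
qed

lemma const_coef:
  assumes yX: "y \<in> X" and sup: "is_support (Xs i) y S"
  shows "\<exists>c>0. y = c *\<^sub>R (\<Sum>e\<in>S. e)"
proof -
  have y0: "y \<noteq> 0" using yX X0 by auto
  obtain lam where L: "\<forall>e\<in>S. lam e > 0" "y = (\<Sum>e\<in>S. lam e *\<^sub>R e)" "S \<noteq> {}" "S \<subseteq> Xs i" "S \<noteq> Xs i" "finite S"
    using support[OF y0 sup] by blast
  have "Min (lam ` S) \<in> lam ` S" using L(3,6) by (intro Min_in) auto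
  then obtain b where b: "b \<in> S" "lam b = Min (lam ` S)" by auto
  have bmin: "\<forall>e\<in>S. lam b \<le> lam e" using b(2) L(6) by (metis Min_le finite_imageI imageI)
  show ?thesis
  proof (cases "\<forall>e\<in>S. lam e = lam b")
    case True
    have "(\<Sum>e\<in>S. lam e *\<^sub>R e) = (\<Sum>e\<in>S. lam b *\<^sub>R e)" by (rule sum.cong) (use True in auto)
    then have "y = lam b *\<^sub>R (\<Sum>e\<in>S. e)" using L(2) by (simp add: scaleR_sum_right)
    then show ?thesis using L(1) b(1) by blast
  next
    case False
    then obtain e0 where e0: "e0 \<in> S" "lam e0 \<noteq> lam b" by auto
    have e0b: "lam e0 > lam b" using bmin e0 by force
    have e0nb: "e0 \<noteq> b" using e0 by auto
    have xiS: "xi \<notin> S" using no_xi[OF yX sup e0(1) b(1) e0nb] .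
    obtain s where s: "s \<in> S" "s \<noteq> y" using e0(1) b(1) e0nb by metis
    have ynX: "y \<notin> Xs i" using notin_Xs[OF L(4) L(2) L(1) s xiX xiS] .
    define lx where "lx e = (if e \<in> S then lam e else 0)" for e
    have ysum: "y = (\<Sum>e\<in>Xs i. lx e *\<^sub>R e)" using ext_sum[OF L(4)] L(2) by (simp add: lx_def)
    have fin: "finite (Xs i)" using finXs[OF ik] .
    have bxi: "b \<noteq> xi" using b xiS by auto
    have bX: "b \<in> Xs i" using b L(4) by auto
    have yspan: "y \<in> span (Xs i)" using span_of_support[OF L(4)] L(2) by simp
    define C where "C = {y} \<union> (Xs i - {xi, b})"
    have False
    proof (rule main[of C])
      show "C \<subseteq> X" using yX Xs_sub[OF ik] by (auto simp: C_def)
      show "C \<subseteq> span (Xs i)" using yspan span_superset by (auto simp: C_def)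
      have c1: "card (Xs i - {xi, b}) = card (Xs i) - 2"
        using fin xiX bX bxi by (simp add: card_Diff_subset)
      have c2: "card C = card (Xs i - {xi, b}) + 1" using fin ynX by (simp add: C_def)
      have "card {xi, b} \<le> card (Xs i)" using fin xiX bX by (intro card_mono) auto
      then show "card (Xs i) \<le> card C + 1" using c1 c2 bxi by simp
    next
      fix \<gamma> c assume rel: "\<gamma> *\<^sub>R xi + (\<Sum>v\<in>C. c v *\<^sub>R v) = 0"
      define K where "K e = (if e = xi then \<gamma> else 0) + (\<Sum>y'\<in>{y}. c y' * lx e) + (if e \<in> {xi,b} then 0 else c e)" for e
      have ex: "\<gamma> *\<^sub>R xi + (\<Sum>v\<in>{y} \<union> (Xs i - {xi,b}). c v *\<^sub>R v) = (\<Sum>e\<in>Xs i. K e *\<^sub>R e)"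
        unfolding K_def by (rule expand) (use ynX xiX bX ysum in auto)
      have K0: "(\<Sum>e\<in>Xs i. K e *\<^sub>R e) = 0" using ex rel by (simp add: C_def)
      have K: "K e = K e'" if "e \<in> Xs i" "e' \<in> Xs i" for e e' using ones[OF ik K0 that] .
      have Kxi: "K xi = \<gamma>" using xiS bxi by (simp add: K_def lx_def)
      have Kb: "K b = c y * lam b" using b bxi by (simp add: K_def lx_def)
      have Kv: "K v = c y * lx v + c v" if "v \<in> Xs i - {xi,b}" for v using that by (simp add: K_def)
      have e0D: "e0 \<in> Xs i - {xi,b}" using e0 e0nb xiS L(4) by auto
      have eq1: "\<gamma> = c y * lam b" using K[OF xiX bX] Kxi Kb by simp
      have eq2: "c y * lam e0 + c e0 = \<gamma>" using K[of e0 xi] e0D xiX Kv[OF e0D] Kxi e0 by (simp add: lx_def)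
      have yC: "y \<in> C" and e0C: "e0 \<in> C" using e0D by (auto simp: C_def)
      have lb: "lam b > 0" using L(1) b by auto
      show "(\<gamma> = 0 \<longrightarrow> (\<forall>v\<in>C. c v = 0)) \<and> (\<gamma> \<noteq> 0 \<longrightarrow> (\<exists>v\<in>C. c v > 0) \<and> (\<exists>v\<in>C. c v < 0))"
      proof (rule conjI; intro impI)
        assume g0: "\<gamma> = 0"
        then have cy: "c y = 0" using eq1 lb by simp
        show "\<forall>v\<in>C. c v = 0"
        proof
          fix v assume "v \<in> C"
          then consider "v = y" | "v \<in> Xs i - {xi,b}" by (auto simp: C_def)
          then show "c v = 0"
          proof cases
            case 1 then show ?thesis using cy by simp
          next
            case 2 then have "K v = K xi" using K[of v xi] xiX by simp
            then show ?thesis using Kv[OF 2] Kxi g0 cy by simp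
          qed
        qed
      next
        assume "\<gamma> \<noteq> 0"
        then have cy0: "c y \<noteq> 0" using eq1 by auto
        have ce0: "c e0 = c y * (lam b - lam e0)" using eq1 eq2 by (simp add: algebra_simps)
        have neg: "lam b - lam e0 < 0" using e0b by simp
        have "c y > 0 \<or> c y < 0" using cy0 by linarith
        then show "(\<exists>v\<in>C. c v > 0) \<and> (\<exists>v\<in>C. c v < 0)"
        proof
          assume cp: "c y > 0"
          then have "c e0 < 0" using neg ce0 by (simp add: mult_pos_neg)
          then show ?thesis using yC e0C cp by blast
        next
          assume cn: "c y < 0"
          then have "c e0 > 0" using neg ce0 by (simp add: mult_neg_neg)
          then show ?thesis using yC e0C cn by blast
        qed
      qed
    qed
    then show ?thesis ..
  qed
qed

lemma laminar:
  assumes pX: "p \<in> X" and sp: "is_support (Xs i) p Sp" and qX: "q \<in> X" and sq: "is_support (Xs i) q Sq"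
  shows "Sp \<inter> Sq = {} \<or> Sp \<subseteq> Sq \<or> Sq \<subseteq> Sp"
proof (rule ccontr)
  assume "\<not> (Sp \<inter> Sq = {} \<or> Sp \<subseteq> Sq \<or> Sq \<subseteq> Sp)"
  then obtain s a b where s: "s \<in> Sp" "s \<in> Sq" and a: "a \<in> Sp" "a \<notin> Sq" and b: "b \<in> Sq" "b \<notin> Sp"
    by blast
  have xip: "xi \<notin> Sp" using no_xi[OF pX sp s(1) a(1)] a s by auto
  have xiq: "xi \<notin> Sq" using no_xi[OF qX sq s(2) b(1)] b s by auto
  obtain \<mu> where mu: "\<mu> > 0" "p = \<mu> *\<^sub>R (\<Sum>e\<in>Sp. e)" using const_coef[OF pX sp] by blast
  obtain \<nu> where nu: "\<nu> > 0" "q = \<nu> *\<^sub>R (\<Sum>e\<in>Sq. e)" using const_coef[OF qX sq] by blast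
  have p0: "p \<noteq> 0" using pX X0 by auto
  have q0: "q \<noteq> 0" using qX X0 by auto
  obtain lp where Lp: "\<forall>e\<in>Sp. lp e > 0" "p = (\<Sum>e\<in>Sp. lp e *\<^sub>R e)" "Sp \<noteq> {}" "Sp \<subseteq> Xs i" "Sp \<noteq> Xs i" "finite Sp"
    using support[OF p0 sp] by blast
  obtain lq where Lq: "\<forall>e\<in>Sq. lq e > 0" "q = (\<Sum>e\<in>Sq. lq e *\<^sub>R e)" "Sq \<noteq> {}" "Sq \<subseteq> Xs i" "Sq \<noteq> Xs i" "finite Sq"
    using support[OF q0 sq] by blast
  define fp where "fp e = (if e \<in> Sp then \<mu> else 0)" for e
  define fq where "fq e = (if e \<in> Sq then \<nu> else 0)" for e
  have psum: "p = (\<Sum>e\<in>Xs i. fp e *\<^sub>R e)"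
    using ext_sum[OF Lp(4), of "\<lambda>_. \<mu>"] mu(2) by (simp add: fp_def scaleR_sum_right)
  have qsum: "q = (\<Sum>e\<in>Xs i. fq e *\<^sub>R e)"
    using ext_sum[OF Lq(4), of "\<lambda>_. \<nu>"] nu(2) by (simp add: fq_def scaleR_sum_right)
  have fin: "finite (Xs i)" using finXs[OF ik] .
  have aX: "a \<in> Xs i" and bX: "b \<in> Xs i" and sX: "s \<in> Xs i" using a b s Lp(4) Lq(4) by auto
  obtain sp' where sp': "sp' \<in> Sp" "sp' \<noteq> p" using a(1) s(1) a(2) s(2) by blast
  obtain sq' where sq': "sq' \<in> Sq" "sq' \<noteq> q" using b(1) s(2) b(2) s(1) by blast
  have pnX: "p \<notin> Xs i" using notin_Xs[OF Lp(4) Lp(2) Lp(1) sp' xiX xip] .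
  have qnX: "q \<notin> Xs i" using notin_Xs[OF Lq(4) Lq(2) Lq(1) sq' xiX xiq] .
  have pq: "p \<noteq> q"
  proof
    assume pqe: "p = q"
    have "(\<Sum>e\<in>Xs i. (fp e - fq e) *\<^sub>R e) = (\<Sum>e\<in>Xs i. fp e *\<^sub>R e) - (\<Sum>e\<in>Xs i. fq e *\<^sub>R e)"
      by (simp add: scaleR_diff_left sum_subtractf)
    also have "\<dots> = 0" unfolding psum[symmetric] qsum[symmetric] pqe by simp
    finally have "(\<Sum>e\<in>Xs i. (fp e - fq e) *\<^sub>R e) = 0" .
    then have "fp a - fq a = fp xi - fq xi" by (rule ones[OF ik _ aX xiX])
    then show False using a xip xiq mu by (simp add: fp_def fq_def)
  qed
  have xia: "xi \<noteq> a" "xi \<noteq> b" "a \<noteq> b" "s \<noteq> xi" "s \<noteq> a" "s \<noteq> b" using a b s xip xiq by auto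
  define LL where "LL y e = (if y = p then fp e else fq e)" for y e
  define C where "C = {p, q} \<union> (Xs i - {xi, a, b})"
  have LLp: "LL p = fp" and LLq: "LL q = fq" using pq by (auto simp: LL_def fun_eq_iff)
  have lamY: "y = (\<Sum>e\<in>Xs i. LL y e *\<^sub>R e)" if "y \<in> {p,q}" for y
  proof -
    from that consider "y = p" | "y = q" by blast
    then show ?thesis
    proof cases
      case 1 show ?thesis unfolding 1 LLp by (rule psum)
    next
      case 2 show ?thesis unfolding 2 LLq by (rule qsum)
    qed
  qed
  have pspan: "p \<in> span (Xs i)" using span_of_support[OF Lp(4)] Lp(2) by simp
  have qspan: "q \<in> span (Xs i)" using span_of_support[OF Lq(4)] Lq(2) by simp
  show False
  proof (rule main[of C])
    show "C \<subseteq> X" using pX qX Xs_sub[OF ik] by (auto simp: C_def)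
    show "C \<subseteq> span (Xs i)" using pspan qspan span_superset by (auto simp: C_def)
    have c3: "card {xi, a, b} = 3" using xia by simp
    have c1: "card (Xs i - {xi, a, b}) = card (Xs i) - 3"
      using fin xiX aX bX c3 card_Diff_subset[of "{xi,a,b}" "Xs i"] by simp
    have c2: "card C = card (Xs i - {xi, a, b}) + 2" using fin pnX qnX pq by (simp add: C_def)
    have "card {xi, a, b} \<le> card (Xs i)" using fin xiX aX bX by (intro card_mono) auto
    then show "card (Xs i) \<le> card C + 1" using c1 c2 xia by simp
  next
    fix \<gamma> c assume rel: "\<gamma> *\<^sub>R xi + (\<Sum>v\<in>C. c v *\<^sub>R v) = 0"
    define K where "K e = (if e = xi then \<gamma> else 0) + (\<Sum>y\<in>{p,q}. c y * LL y e) + (if e \<in> {xi,a,b} then 0 else c e)" for e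
    have ex: "\<gamma> *\<^sub>R xi + (\<Sum>v\<in>{p,q} \<union> (Xs i - {xi,a,b}). c v *\<^sub>R v) = (\<Sum>e\<in>Xs i. K e *\<^sub>R e)"
      unfolding K_def by (rule expand[OF _ _ _ lamY]) (use pnX qnX xiX aX bX in auto)
    have K0: "(\<Sum>e\<in>Xs i. K e *\<^sub>R e) = 0" using ex rel by (simp add: C_def)
    have K: "K e = K e'" if "e \<in> Xs i" "e' \<in> Xs i" for e e' using ones[OF ik K0 that] .
    have Kv: "K v = c p * fp v + c q * fq v + c v" if "v \<in> Xs i - {xi,a,b}" for v
      using that pq by (simp add: K_def LL_def)
    have Kxi: "K xi = \<gamma>" using xip xiq pq by (simp add: K_def LL_def fp_def fq_def)
    have Ka: "K a = c p * \<mu>" using a xia pq by (simp add: K_def LL_def fp_def fq_def)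
    have Kb: "K b = c q * \<nu>" using b xia pq by (simp add: K_def LL_def fp_def fq_def)
    have sD: "s \<in> Xs i - {xi,a,b}" using sX xia by auto
    have Ks: "K s = c p * \<mu> + c q * \<nu> + c s" using Kv[OF sD] s by (simp add: fp_def fq_def)
    have eq1: "c p * \<mu> = \<gamma>" using K[OF aX xiX] Ka Kxi by simp
    have eq2: "c q * \<nu> = \<gamma>" using K[OF bX xiX] Kb Kxi by simp
    have eq3: "c s = - \<gamma>" using K[OF sX xiX] Ks Kxi eq1 eq2 by simp
    have pC: "p \<in> C" and sC: "s \<in> C" using sD by (auto simp: C_def)
    show "(\<gamma> = 0 \<longrightarrow> (\<forall>v\<in>C. c v = 0)) \<and> (\<gamma> \<noteq> 0 \<longrightarrow> (\<exists>v\<in>C. c v > 0) \<and> (\<exists>v\<in>C. c v < 0))"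
    proof (rule conjI; intro impI)
      assume g0: "\<gamma> = 0"
      then have cp: "c p = 0" and cq: "c q = 0" using eq1 eq2 mu(1) nu(1) by auto
      show "\<forall>v\<in>C. c v = 0"
      proof
        fix v assume "v \<in> C"
        then consider "v = p" | "v = q" | "v \<in> Xs i - {xi,a,b}" by (auto simp: C_def)
        then show "c v = 0"
        proof cases
          case 1 then show ?thesis using cp by simp
        next
          case 2 then show ?thesis using cq by simp
        next
          case 3 then have vX: "v \<in> Xs i" by simp
          have "K v = K xi" by (rule K[OF vX xiX])
          then show ?thesis using Kv[OF 3] Kxi g0 cp cq by simp
        qed
      qed
    next
      assume gn: "\<gamma> \<noteq> 0"
      have "\<gamma> > 0 \<or> \<gamma> < 0" using gn by linarith
      then show "(\<exists>v\<in>C. c v > 0) \<and> (\<exists>v\<in>C. c v < 0)"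
      proof
        assume gp: "\<gamma> > 0"
        have "0 < c p * \<mu>" using eq1 gp by simp
        then have cpp: "c p > 0" using mu(1) by (simp add: zero_less_mult_iff)
        have csn: "c s < 0" using eq3 gp by simp
        show ?thesis using pC sC cpp csn by blast
      next
        assume gm: "\<gamma> < 0"
        have "c p * \<mu> < 0" using eq1 gm by simp
        then have cpn: "c p < 0" using mu(1) by (simp add: mult_less_0_iff)
        have csp: "c s > 0" using eq3 gm by simp
        show ?thesis using pC sC cpn csp by blast
      qed
    qed
  qed
qed

end

theorem proposition5p5:
  fixes X :: "'a::euclidean_space set" and k :: nat and Xs :: "nat \<Rightarrow> 'a set"
    and x xi xj :: 'a and i j :: nat
  assumes "standing X"
    and "skeleton X k Xs"
    and "\<forall>l<k. (\<Sum>e\<in>Xs l. e) = 0"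
    and "x \<in> X" and "\<forall>l<k. x \<notin> span (Xs l)"
    and "i < k" and "j < k" and "i \<noteq> j"
    and "xi \<in> Xs i" and "xj \<in> Xs j" and "x \<in> pos {xi, xj}"
  shows "(\<forall>y\<in>X \<inter> span (Xs i). \<forall>S. is_support (Xs i) y S \<longrightarrow>
            (\<exists>c::real. c > 0 \<and> y = c *\<^sub>R (\<Sum>e\<in>S. e)))
       \<and> (\<forall>p\<in>X \<inter> span (Xs i). \<forall>q\<in>X \<inter> span (Xs i). \<forall>Sp Sq.
            is_support (Xs i) p Sp \<and> is_support (Xs i) q Sq \<longrightarrow>
            Sp \<inter> Sq = {} \<or> Sp \<subseteq> Sq \<or> Sq \<subseteq> Sp)"
proof -
  interpret P55 X k Xs x xi xj i j by (intro P55.intro assms)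
  have A: "\<forall>y\<in>X \<inter> span (Xs i). \<forall>S. is_support (Xs i) y S \<longrightarrow>
            (\<exists>c::real. c > 0 \<and> y = c *\<^sub>R (\<Sum>e\<in>S. e))"
  proof (intro ballI allI impI)
    fix y S assume "y \<in> X \<inter> span (Xs i)" "is_support (Xs i) y S"
    then show "\<exists>c::real. c > 0 \<and> y = c *\<^sub>R (\<Sum>e\<in>S. e)" using const_coef[of y S] by simp
  qed
  have B: "\<forall>p\<in>X \<inter> span (Xs i). \<forall>q\<in>X \<inter> span (Xs i). \<forall>Sp Sq.
            is_support (Xs i) p Sp \<and> is_support (Xs i) q Sq \<longrightarrow>
            Sp \<inter> Sq = {} \<or> Sp \<subseteq> Sq \<or> Sq \<subseteq> Sp"
  proof (intro ballI allI impI)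
    fix p q Sp Sq assume "p \<in> X \<inter> span (Xs i)" "q \<in> X \<inter> span (Xs i)"
      "is_support (Xs i) p Sp \<and> is_support (Xs i) q Sq"
    then show "Sp \<inter> Sq = {} \<or> Sp \<subseteq> Sq \<or> Sq \<subseteq> Sp" using laminar[of p Sp q Sq] by simp
  qed
  show ?thesis using A B by (rule conjI)
qed

end
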